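(* Let $\mathbf{a},\mathbf{b}\in\mathbb{R}^m$ satisfy $\mathcal{U}^{\mathbf{a},\mathbf{b}}\neq\emptyset$, let $\mathrm{h}^{\mathbf{a},\mathbf{b}}$ be an $\ell$-MRC for $\mathcal{U}^{\mathbf{a},\mathbf{b}}$, and let $\underline{R}^{\,\mathbf{a},\mathbf{b}}_{\ell}$ be the maximum value of the linear program $$\max_{\boldsymbol{\mu},\boldsymbol{\eta},\nu}\ \tfrac{1}{2}(\mathbf{b}+\mathbf{a})^{\mathrm{T}}\boldsymbol{\mu}-\tfrac{1}{2}(\mathbf{b}-\mathbf{a})^{\mathrm{T}}\boldsymbol{\eta}+\nu\ \text{ s.t. } \Phi(x,y)^{\mathrm{T}}\boldsymbol{\mu}+\nu\leq \ell(\mathrm{h}^{\mathbf{a},\mathbf{b}},(x,y))\ \forall x\in\mathcal{X},y\in\mathcal{Y},\ \boldsymbol{\eta}+\boldsymbol{\mu}\succeq\mathbf{0},\ \boldsymbol{\eta}-\boldsymbol{\mu}\succeq\mathbf{0}.$$ If $\mathrm{p}^*\in\mathcal{U}^{\mathbf{a},\mathbf{b}}$, then $$\underline{R}^{\,\mathbf{a},\mathbf{b}}_{\ell}\leq R_\ell(\mathrm{h}^{\mathbf{a},\mathbf{b}})\leq H_\ell(\mathcal{U}^{\mathbf{a},\mathbf{b}}).$$ In addition, $R_\ell(\mathrm{h}^{\mathbf{a},\mathbf{b}})=H_\ell(\mathcal{U}^{\mathbf{a},\mathbf{b}})$ if $\mathrm{p}^*$ maximizes the $\ell$-entropy over $\mathcal{U}^{\mathbf{a},\mathbf{b}}$,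 and $R_\ell(\mathrm{h}^{\mathbf{a},\mathbf{b}})=\underline{R}^{\,\mathbf{a},\mathbf{b}}_{\ell}$ if $\mathrm{p}^*$ minimizes the expected $\ell$-loss of $\mathrm{h}^{\mathbf{a},\mathbf{b}}$ over $\mathcal{U}^{\mathbf{a},\mathbf{b}}$.
   Context: Let $\mathcal{X},\mathcal{Y}$ be finite nonempty sets, $\mathcal{Y}=\{1,\dots,|\mathcal{Y}|\}$; $\Delta(\mathcal{Z})$ is the set of probability distributions on a finite set $\mathcal{Z}$. A classification rule $\mathrm{h}$ assigns to each $x$ a distribution $\mathrm{h}(\cdot|x)\in\Delta(\mathcal{Y})$; $\mathrm{T}(\mathcal{X},\mathcal{Y})$ is the set of such rules. A score function $L:\Delta(\mathcal{Y})\times\mathcal{Y}\to(-\infty,\infty]$ is lower semi-continuous and convex in its first argument; $\ell(\mathrm{h},(x,y))=L(\mathrm{h}(\cdot|x),y)$, $\ell(\mathrm{h},\mathrm{p})=\sum_{x,y}\mathrm{p}(x,y)\ell(\mathrm{h},(x,y))$. $H_\ell(\mathrm{p})=\min_{\mathrm{h}}\ell(\mathrm{h},\mathrm{p})$, $H_\ell(\mathcal{U})=\max_{\mathrm{p}\in\mathcal{U}}H_\ell(\mathrm{p})$; an $\ell$-MRC for convex compact $\mathcal{U}$ is a minimizer over $\mathrm{T}(\mathcal{X},\mathcal{Y})$ of $\max_{\mathrm{p}\in\mathcal{U}}\ell(\mathrm{h},\mathrm{p})$. $\mathrm{p}^*$ is the true underlying distribution and $R_\ell(\mathrm{h})=\ell(\mathrm{h},\mathrm{p}^*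 )$. $\Phi:\mathcal{X}\times\mathcal{Y}\to\mathbb{R}^m$ is a feature mapping, $\preceq,\succeq$ are componentwise, and $\mathcal{U}^{\mathbf{a},\mathbf{b}}=\{\mathrm{p}\in\Delta(\mathcal{X}\times\mathcal{Y}):\mathbf{a}\preceq\mathbb{E}_{\mathrm{p}}\{\Phi(x,y)\}\preceq\mathbf{b}\}$. *)

theory Defs
  imports "HOL-Analysis.Analysis"
begin

definition dist_simplex :: "('z::finite \<Rightarrow> real) set" where
  "dist_simplex = {p. (\<forall>z. 0 \<le> p z) \<and> (\<Sum>z\<in>UNIV. p z) = 1}"

definition rules :: "('x::finite \<Rightarrow> 'y::finite \<Rightarrow> real) set" where
  "rules = {h. \<forall>x. h x \<in> dist_simplex}"

definition score_function :: "(('y::finite \<Rightarrow> real) \<Rightarrow> 'y \<Rightarrow> ereal) \<Rightarrow> bool" where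
  "score_function L \<longleftrightarrow>
     (\<forall>q\<in>dist_simplex. \<forall>y. L q y \<noteq> -\<infinity>) \<and>
     (\<forall>y. \<forall>q\<in>dist_simplex. \<forall>c. c < L q y \<longrightarrow>
          eventually (\<lambda>r. c < L r y) (at q within dist_simplex)) \<and>
     (\<forall>y. \<forall>q\<in>dist_simplex. \<forall>r\<in>dist_simplex. \<forall>t::real. 0 \<le> t \<and> t \<le> 1 \<longrightarrow>
          L (\<lambda>z. (1 - t) * q z + t * r z) y
            \<le> ereal (1 - t) * L q y + ereal t * L r y)"

definition loss_pt :: "(('y \<Rightarrow> real) \<Rightarrow> 'y \<Rightarrow> ereal) \<Rightarrow> ('x \<Rightarrow> 'y \<Rightarrow> real) \<Rightarrow> 'x \<Rightarrow> 'y \<Rightarrow> ereal" where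
  "loss_pt L h x y = L (h x) y"

definition exp_loss :: "(('y::finite \<Rightarrow> real) \<Rightarrow> 'y \<Rightarrow> ereal) \<Rightarrow> ('x::finite \<Rightarrow> 'y \<Rightarrow> real)
    \<Rightarrow> ('x \<times> 'y \<Rightarrow> real) \<Rightarrow> ereal" where
  "exp_loss L h p = (\<Sum>(x,y)\<in>UNIV. ereal (p (x,y)) * loss_pt L h x y)"

text \<open>l-entropy of a distribution and of an uncertainty set
  (min / max rendered as Inf / Sup).\<close>
definition entropy :: "(('y::finite \<Rightarrow> real) \<Rightarrow> 'y \<Rightarrow> ereal) \<Rightarrow> ('x::finite \<times> 'y \<Rightarrow> real) \<Rightarrow> ereal" where
  "entropy L p = (INF h\<in>rules. exp_loss L h p)"

definition entropy_set :: "(('y::finite \<Rightarrow> real) \<Rightarrow> 'y \<Rightarrow> ereal) \<Rightarrow> ('x::finite \<times> 'y \<Rightarrow> real) set \<Rightarrow> ereal" where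
  "entropy_set L U = (SUP p\<in>U. entropy L p)"

definition worst_loss :: "(('y::finite \<Rightarrow> real) \<Rightarrow> 'y \<Rightarrow> ereal) \<Rightarrow> ('x::finite \<times> 'y \<Rightarrow> real) set
    \<Rightarrow> ('x \<Rightarrow> 'y \<Rightarrow> real) \<Rightarrow> ereal" where
  "worst_loss L U h = (SUP p\<in>U. exp_loss L h p)"

definition is_MRC :: "(('y::finite \<Rightarrow> real) \<Rightarrow> 'y \<Rightarrow> ereal) \<Rightarrow> ('x::finite \<times> 'y \<Rightarrow> real) set
    \<Rightarrow> ('x \<Rightarrow> 'y \<Rightarrow> real) \<Rightarrow> bool" where
  "is_MRC L U h \<longleftrightarrow> h \<in> rules \<and> (\<forall>h'\<in>rules. worst_loss L U h \<le> worst_loss L U h')"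

definition feat_exp :: "('x::finite \<Rightarrow> 'y::finite \<Rightarrow> real^'m) \<Rightarrow> ('x \<times> 'y \<Rightarrow> real) \<Rightarrow> real^'m" where
  "feat_exp \<Phi> p = (\<Sum>(x,y)\<in>UNIV. p (x,y) *\<^sub>R \<Phi> x y)"

definition Uab :: "('x::finite \<Rightarrow> 'y::finite \<Rightarrow> real^'m) \<Rightarrow> real^'m \<Rightarrow> real^'m \<Rightarrow> ('x \<times> 'y \<Rightarrow> real) set" where
  "Uab \<Phi> a b = {p\<in>dist_simplex. \<forall>i. a $ i \<le> feat_exp \<Phi> p $ i \<and> feat_exp \<Phi> p $ i \<le> b $ i}"

text \<open>Optimal value of the linear program giving the lower bound (sup of the objective
  over the feasible set; it is the maximum when attained).\<close>
definition LP_lower :: "(('y::finite \<Rightarrow> real) \<Rightarrow> 'y \<Rightarrow> ereal) \<Rightarrow> ('x::finite \<Rightarrow> 'y \<Rightarrow> real^'m)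
    \<Rightarrow> real^'m \<Rightarrow> real^'m \<Rightarrow> ('x \<Rightarrow> 'y \<Rightarrow> real) \<Rightarrow> ereal" where
  "LP_lower L \<Phi> a b h =
     Sup {ereal ((1/2) * ((b + a) \<bullet> \<mu>) - (1/2) * ((b - a) \<bullet> \<eta>) + \<nu>) | \<mu> \<eta> \<nu>.
            (\<forall>x y. ereal (\<Phi> x y \<bullet> \<mu> + \<nu>) \<le> loss_pt L h x y) \<and>
            (\<forall>i. 0 \<le> \<eta> $ i + \<mu> $ i \<and> 0 \<le> \<eta> $ i - \<mu> $ i)}"

end

theory Submission
  imports Defs
begin


lemma exp_loss_alt: "exp_loss L h p = (\<Sum>z\<in>UNIV. ereal (p z) * L (h (fst z)) (snd z))"
  unfolding exp_loss_def loss_pt_def by (simp add: case_prod_unfold)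

lemma exp_loss_finite:
  assumes "\<And>z. p z \<noteq> 0 \<Longrightarrow> L (h (fst z)) (snd z) = ereal (w z)"
  shows "exp_loss L h p = ereal (\<Sum>z\<in>UNIV. p z * w z)"
  unfolding exp_loss_alt sum_ereal[symmetric]
proof (rule sum.cong)
  fix z show "ereal (p z) * L (h (fst z)) (snd z) = ereal (p z * w z)"
    using assms[of z] by (cases "p z = 0") (auto simp: zero_ereal_def[symmetric])
qed simp

lemma exp_loss_inf:
  assumes "\<forall>z. L (h (fst z)) (snd z) \<noteq> -\<infinity>" "\<forall>z. p z \<ge> 0" "p z0 > 0"
    "L (h (fst z0)) (snd z0) = \<infinity>"
  shows "exp_loss L h p = \<infinity>"
proof -
  have e: "ereal (p z0) * L (h (fst z0)) (snd z0) = \<infinity>" using assms by simp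
  have "(\<Sum>z\<in>UNIV. ereal (p z) * L (h (fst z)) (snd z)) = \<infinity>"
    unfolding sum_Pinfty using e by (metis UNIV_I finite_class.finite_UNIV)
  then show ?thesis unfolding exp_loss_alt .
qed

lemma feat_exp_nth: "feat_exp \<Phi> p $ i = (\<Sum>z\<in>UNIV. p z * \<Phi> (fst z) (snd z) $ i)"
  unfolding feat_exp_def by (simp add: case_prod_unfold)

lemma Uab_comb:
  fixes P :: "'j \<Rightarrow> ('x::finite \<times> 'y::finite \<Rightarrow> real)"
  assumes "finite J" "\<forall>j\<in>J. P j \<in> Uab \<Phi> a b" "\<forall>j\<in>J. c j \<ge> 0" "sum c J = 1"
  shows "(\<lambda>z. \<Sum>j\<in>J. c j * P j z) \<in> Uab \<Phi> a b"
proof -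
  have P: "\<forall>z. 0 \<le> P j z" "(\<Sum>z\<in>UNIV. P j z) = 1"
    "\<forall>i. a $ i \<le> (\<Sum>z\<in>UNIV. P j z * \<Phi> (fst z) (snd z) $ i) \<and> (\<Sum>z\<in>UNIV. P j z * \<Phi> (fst z) (snd z) $ i) \<le> b $ i"
    if "j \<in> J" for j using assms(2) that unfolding Uab_def dist_simplex_def by (auto simp: feat_exp_nth)
  have s1: "(\<Sum>z\<in>UNIV. \<Sum>j\<in>J. c j * P j z) = 1"
  proof -
    have "(\<Sum>z\<in>UNIV. \<Sum>j\<in>J. c j * P j z) = (\<Sum>j\<in>J. \<Sum>z\<in>UNIV. c j * P j z)" by (rule sum.swap)
    also have "\<dots> = (\<Sum>j\<in>J. c j * (\<Sum>z\<in>UNIV. P j z))" by (simp add: sum_distrib_left)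
    also have "\<dots> = (\<Sum>j\<in>J. c j)" using P(2) by simp
    finally show ?thesis using assms(4) by simp
  qed
  have fe: "(\<Sum>z\<in>UNIV. (\<Sum>j\<in>J. c j * P j z) * \<Phi> (fst z) (snd z) $ i)
      = (\<Sum>j\<in>J. c j * (\<Sum>z\<in>UNIV. P j z * \<Phi> (fst z) (snd z) $ i))" for i
    by (simp add: sum_distrib_left sum_distrib_right sum.swap[of _ UNIV] mult.assoc)
  have lo: "a $ i \<le> (\<Sum>j\<in>J. c j * (\<Sum>z\<in>UNIV. P j z * \<Phi> (fst z) (snd z) $ i))" for i
  proof -
    have "a $ i = (\<Sum>j\<in>J. c j * a $ i)" using assms(4) by (simp add: sum_distrib_right[symmetric])
    also have "\<dots> \<le> (\<Sum>j\<in>J. c j * (\<Sum>z\<in>UNIV. P j z * \<Phi> (fst z) (snd z) $ i))" by (rule sum_mono) (use P(3) assms(3) in \<open>auto intro: mult_left_mono\<close>)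
    finally show ?thesis .
  qed
  have hi: "(\<Sum>j\<in>J. c j * (\<Sum>z\<in>UNIV. P j z * \<Phi> (fst z) (snd z) $ i)) \<le> b $ i" for i
  proof -
    have "(\<Sum>j\<in>J. c j * (\<Sum>z\<in>UNIV. P j z * \<Phi> (fst z) (snd z) $ i)) \<le> (\<Sum>j\<in>J. c j * b $ i)"
      by (rule sum_mono) (use P(3) assms(3) in \<open>auto intro: mult_left_mono\<close>)
    also have "\<dots> = b $ i" using assms(4) by (simp add: sum_distrib_right[symmetric])
    finally show ?thesis .
  qed
  show ?thesis unfolding Uab_def dist_simplex_def
    using s1 lo hi fe P(1) assms(3) by (auto simp: feat_exp_nth intro!: sum_nonneg)
qed

lemma Uab_conv2:
  assumes "p \<in> Uab \<Phi> a b" "q \<in> Uab \<Phi> a b" "0 \<le> t" "t \<le> 1"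
  shows "(\<lambda>z. (1-t) * p z + t * q z) \<in> Uab \<Phi> a b"
proof -
  have "(\<lambda>z. \<Sum>j\<in>UNIV. (if j then t else 1 - t) * (if j then q else p) z) \<in> Uab \<Phi> a b"
    by (rule Uab_comb) (use assms in \<open>auto simp: UNIV_bool\<close>)
  then show ?thesis by (simp add: UNIV_bool add.commute)
qed



lemma obj_le_inner:
  fixes a b e \<mu> \<eta> :: "real^'m"
  assumes "\<forall>i. a$i \<le> e$i \<and> e$i \<le> b$i" "\<forall>i. 0 \<le> \<eta> $ i + \<mu> $ i \<and> 0 \<le> \<eta> $ i - \<mu> $ i"
  shows "(1/2) * ((b + a) \<bullet> \<mu>) - (1/2) * ((b - a) \<bullet> \<eta>) \<le> e \<bullet> \<mu>"
proof -
  have "(1/2) * ((b + a) \<bullet> \<mu>) - (1/2) * ((b - a) \<bullet> \<eta>)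
      = (\<Sum>i\<in>UNIV. (1/2) * ((b$i + a$i) * \<mu>$i) - (1/2) * ((b$i - a$i) * \<eta>$i))"
    by (simp add: inner_vec_def sum_distrib_left sum_subtractf)
  also have "\<dots> \<le> (\<Sum>i\<in>UNIV. e$i * \<mu>$i)"
  proof (rule sum_mono)
    fix i
    have h: "a$i \<le> e$i" "e$i \<le> b$i" "0 \<le> \<eta> $ i + \<mu> $ i" "0 \<le> \<eta> $ i - \<mu> $ i" using assms by auto
    have "(b$i - e$i) * \<mu>$i \<le> (b$i - e$i) * \<eta>$i" using h by (intro mult_left_mono) auto
    moreover have "(e$i - a$i) * (-\<mu>$i) \<le> (e$i - a$i) * \<eta>$i" using h by (intro mult_left_mono) auto
    ultimately show "(1/2) * ((b$i + a$i) * \<mu>$i) - (1/2) * ((b$i - a$i) * \<eta>$i) \<le> e$i * \<mu>$i"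
      by (simp add: algebra_simps)
  qed
  also have "\<dots> = e \<bullet> \<mu>" by (simp add: inner_vec_def)
  finally show ?thesis .
qed

lemma vertex:
  fixes a b \<mu> :: "real^'m"
  assumes "\<forall>i. a$i \<le> b$i"
  shows "\<exists>e. (\<forall>i. a$i \<le> e$i \<and> e$i \<le> b$i) \<and>
    (1/2) * ((b + a) \<bullet> \<mu>) - (1/2) * ((b - a) \<bullet> (\<chi> i. \<bar>\<mu>$i\<bar>)) = e \<bullet> \<mu>"
proof (intro exI conjI)
  let ?e = "(\<chi> i. if \<mu>$i \<ge> 0 then a$i else b$i) :: real^'m"
  show "\<forall>i. a$i \<le> ?e$i \<and> ?e$i \<le> b$i" using assms by auto
  have "(1/2) * ((b + a) \<bullet> \<mu>) - (1/2) * ((b - a) \<bullet> (\<chi> i. \<bar>\<mu>$i\<bar>))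
      = (\<Sum>i\<in>UNIV. (1/2) * ((b$i + a$i) * \<mu>$i) - (1/2) * ((b$i - a$i) * \<bar>\<mu>$i\<bar>))"
    by (simp add: inner_vec_def sum_distrib_left sum_subtractf)
  also have "\<dots> = (\<Sum>i\<in>UNIV. ?e$i * \<mu>$i)"
    by (rule sum.cong) (auto simp: algebra_simps abs_if)
  also have "\<dots> = ?e \<bullet> \<mu>" by (simp add: inner_vec_def)
  finally show "(1/2) * ((b + a) \<bullet> \<mu>) - (1/2) * ((b - a) \<bullet> (\<chi> i. \<bar>\<mu>$i\<bar>)) = ?e \<bullet> \<mu>" .
qed

lemma feat_inner: "feat_exp \<Phi> p \<bullet> \<mu> = (\<Sum>z\<in>UNIV. p z * (\<Phi> (fst z) (snd z) \<bullet> \<mu>))"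
  unfolding feat_exp_def by (simp add: case_prod_unfold inner_sum_left)

lemma lp_le:
  assumes "p \<in> Uab \<Phi> a b" "\<forall>x y. ereal (\<Phi> x y \<bullet> \<mu> + \<nu>) \<le> loss_pt L h x y"
    "\<forall>i. 0 \<le> \<eta> $ i + \<mu> $ i \<and> 0 \<le> \<eta> $ i - \<mu> $ i"
  shows "ereal ((1/2) * ((b + a) \<bullet> \<mu>) - (1/2) * ((b - a) \<bullet> \<eta>) + \<nu>) \<le> exp_loss L h p"
proof -
  have p: "\<forall>z. 0 \<le> p z" "(\<Sum>z\<in>UNIV. p z) = 1" "\<forall>i. a$i \<le> feat_exp \<Phi> p $i \<and> feat_exp \<Phi> p $i \<le> b$i"
    using assms(1) unfolding Uab_def dist_simplex_def by auto
  have "(1/2) * ((b + a) \<bullet> \<mu>) - (1/2) * ((b - a) \<bullet> \<eta>) + \<nu> \<le> feat_exp \<Phi> p \<bullet> \<mu> + \<nu>"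
    using obj_le_inner[OF p(3) assms(3)] by simp
  also have "\<dots> = (\<Sum>z\<in>UNIV. p z * (\<Phi> (fst z) (snd z) \<bullet> \<mu> + \<nu>))"
    using p(2) by (simp add: feat_inner distrib_left sum.distrib sum_distrib_right[symmetric])
  finally have "ereal ((1/2) * ((b + a) \<bullet> \<mu>) - (1/2) * ((b - a) \<bullet> \<eta>) + \<nu>)
      \<le> (\<Sum>z\<in>UNIV. ereal (p z) * ereal (\<Phi> (fst z) (snd z) \<bullet> \<mu> + \<nu>))" by simp
  also have "\<dots> \<le> (\<Sum>z\<in>UNIV. ereal (p z) * L (h (fst z)) (snd z))"
    by (rule sum_mono, rule ereal_mult_left_mono) (use assms(2) p(1) in \<open>auto simp: loss_pt_def\<close>)
  finally show ?thesis by (simp add: exp_loss_alt)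
qed

lemma LP_lower_le:
  assumes "p \<in> Uab \<Phi> a b"
  shows "LP_lower L \<Phi> a b h \<le> exp_loss L h p"
  unfolding LP_lower_def by (rule Sup_least) (use lp_le[OF assms] in blast)



lemma LP_lower_ge:
  fixes \<mu> a b :: "real^'m"
  assumes "\<forall>x y. ereal (\<Phi> x y \<bullet> \<mu> + \<nu>) \<le> loss_pt L h x y" "\<forall>i. a$i \<le> b$i"
    "\<forall>e. (\<forall>i. a$i \<le> e$i \<and> e$i \<le> b$i) \<longrightarrow> t \<le> e \<bullet> \<mu> + \<nu>"
  shows "ereal t \<le> LP_lower L \<Phi> a b h"
proof -
  obtain e where e: "\<forall>i. a$i \<le> e$i \<and> e$i \<le> b$i"
    "(1/2) * ((b + a) \<bullet> \<mu>) - (1/2) * ((b - a) \<bullet> (\<chi> i. \<bar>\<mu>$i\<bar>)) = e \<bullet> \<mu>"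
    using vertex[OF assms(2)] by blast
  let ?\<eta> = "(\<chi> i. \<bar>\<mu>$i\<bar>) :: real^'m"
  have mem: "ereal ((1/2) * ((b + a) \<bullet> \<mu>) - (1/2) * ((b - a) \<bullet> ?\<eta>) + \<nu>) \<in>
     {ereal ((1/2) * ((b + a) \<bullet> \<mu>) - (1/2) * ((b - a) \<bullet> \<eta>) + \<nu>) | \<mu> \<eta> \<nu>.
            (\<forall>x y. ereal (\<Phi> x y \<bullet> \<mu> + \<nu>) \<le> loss_pt L h x y) \<and>
            (\<forall>i. 0 \<le> \<eta> $ i + \<mu> $ i \<and> 0 \<le> \<eta> $ i - \<mu> $ i)}"
    apply (rule CollectI, rule exI[of _ \<mu>], rule exI[of _ ?\<eta>], rule exI[of _ \<nu>])
    using assms(1) by auto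
  have "t \<le> (1/2) * ((b + a) \<bullet> \<mu>) - (1/2) * ((b - a) \<bullet> ?\<eta>) + \<nu>"
    using e assms(3) by auto
  then have "ereal t \<le> ereal ((1/2) * ((b + a) \<bullet> \<mu>) - (1/2) * ((b - a) \<bullet> ?\<eta>) + \<nu>)" by simp
  also have "\<dots> \<le> LP_lower L \<Phi> a b h" unfolding LP_lower_def by (rule Sup_upper[OF mem])
  finally show ?thesis .
qed

lemma LP_dual:
  fixes \<Phi> :: "'x::finite \<Rightarrow> 'y::finite \<Rightarrow> real^'m"
  assumes sf: "score_function L" and hr: "h \<in> rules" and U: "pstar \<in> Uab \<Phi> a b"
    and mn: "\<forall>p\<in>Uab \<Phi> a b. exp_loss L h pstar \<le> exp_loss L h p"
  shows "exp_loss L h pstar \<le> LP_lower L \<Phi> a b h"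
proof -
  define l where "l z = L (h (fst z)) (snd z)" for z :: "'x \<times> 'y"
  have notm: "l z \<noteq> -\<infinity>" for z
    using sf hr unfolding score_function_def rules_def l_def by auto
  define F where "F = {z. l z \<noteq> \<infinity>}"
  define cr where "cr z = real_of_ereal (l z)" for z
  have lF: "z \<in> F \<Longrightarrow> l z = ereal (cr z)" for z
    using notm[of z] unfolding F_def cr_def by (cases "l z") auto
  have lnF: "z \<notin> F \<Longrightarrow> l z = \<infinity>" for z unfolding F_def by auto
  have ab: "\<forall>i. a$i \<le> b$i" using U unfolding Uab_def by (auto intro: order_trans)
  have claim: "ereal t \<le> LP_lower L \<Phi> a b h" if tv: "ereal t < exp_loss L h pstar" for t
  proof -
    define G where "G = (\<lambda>z. (\<Phi> (fst z) (snd z), 1::real, cr z)) ` F \<union> {(0, 0, 1)}"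
    define K where "K = convex_cone hull G"
    define K' where "K' = {(\<Sum>z\<in>UNIV. p z *\<^sub>R \<Phi> (fst z) (snd z), \<Sum>z\<in>UNIV. p z, (\<Sum>z\<in>UNIV. p z * cr z) + s)
       | p s. (\<forall>z. 0 \<le> p z) \<and> (\<forall>z. z \<notin> F \<longrightarrow> p z = 0) \<and> 0 \<le> s}"
    define Bt where "Bt = (\<lambda>e. (e, 1::real, t)) ` cbox a b"
    have finG: "finite G" unfolding G_def by simp
    have closedK: "closed K" unfolding K_def by (rule closed_convex_cone_hull[OF finG])
    have convK: "convex K" unfolding K_def by (rule convex_convex_cone_hull)
    have ccK': "convex_cone K'"
      unfolding convex_cone_iff
    proof (intro conjI)
      show "0 \<in> K'" unfolding K'_def by (auto intro!: exI[of _ "\<lambda>z. 0"] exI[of _ 0] simp: zero_prod_def)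
      show "\<forall>x\<in>K'. \<forall>y\<in>K'. x + y \<in> K'"
      proof (intro ballI)
        fix x y
        assume "x \<in> K'" "y \<in> K'"
        then obtain p s q r where x: "x = (\<Sum>z\<in>UNIV. p z *\<^sub>R \<Phi> (fst z) (snd z), \<Sum>z\<in>UNIV. p z, (\<Sum>z\<in>UNIV. p z * cr z) + s)"
          "\<forall>z. 0 \<le> p z" "\<forall>z. z \<notin> F \<longrightarrow> p z = 0" "0 \<le> s"
          and y: "y = (\<Sum>z\<in>UNIV. q z *\<^sub>R \<Phi> (fst z) (snd z), \<Sum>z\<in>UNIV. q z, (\<Sum>z\<in>UNIV. q z * cr z) + r)"
          "\<forall>z. 0 \<le> q z" "\<forall>z. z \<notin> F \<longrightarrow> q z = 0" "0 \<le> r"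
          unfolding K'_def by blast
        show "x + y \<in> K'" unfolding K'_def
          apply (rule CollectI, rule exI[of _ "\<lambda>z. p z + q z"], rule exI[of _ "s + r"])
          using x y by (simp add: scaleR_add_left sum.distrib distrib_right algebra_simps)
      qed
      show "\<forall>x\<in>K'. \<forall>c\<ge>0. c *\<^sub>R x \<in> K'"
      proof (intro ballI allI impI)
        fix x :: "(real^'m) \<times> real \<times> real" and c :: real
        assume "x \<in> K'" "0 \<le> c"
        then obtain p s where x: "x = (\<Sum>z\<in>UNIV. p z *\<^sub>R \<Phi> (fst z) (snd z), \<Sum>z\<in>UNIV. p z, (\<Sum>z\<in>UNIV. p z * cr z) + s)"
          "\<forall>z. 0 \<le> p z" "\<forall>z. z \<notin> F \<longrightarrow> p z = 0" "0 \<le> s" and c: "0 \<le> c"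
          unfolding K'_def by blast
        show "c *\<^sub>R x \<in> K'" unfolding K'_def
          apply (rule CollectI, rule exI[of _ "\<lambda>z. c * p z"], rule exI[of _ "c * s"])
          using x c by (simp add: scaleR_sum_right sum_distrib_left algebra_simps)
      qed
    qed
    have GK': "G \<subseteq> K'"
    proof
      fix g assume "g \<in> G"
      then consider z where "z \<in> F" "g = (\<Phi> (fst z) (snd z), 1, cr z)" | "g = (0, 0, 1)"
        unfolding G_def by blast
      then show "g \<in> K'"
      proof cases
        case 1
        have e1: "(\<Sum>w\<in>UNIV. (if w = z then 1 else 0) *\<^sub>R \<Phi> (fst w) (snd w)) = \<Phi> (fst z) (snd z)"
          by (simp add: if_distrib[of "\<lambda>c. c *\<^sub>R _"] cong: if_cong)
        have e2: "(\<Sum>w\<in>UNIV. (if w = z then 1 else 0) * cr w) = cr z"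
          by (simp add: if_distrib[of "\<lambda>c. c * _"] cong: if_cong)
        have e3: "(\<Sum>w\<in>UNIV. (if w = z then 1 else 0::real)) = 1" by simp
        show ?thesis unfolding K'_def
          apply (rule CollectI, rule exI[of _ "\<lambda>w. if w = z then 1 else 0"], rule exI[of _ 0])
          using 1 e1 e2 e3 by auto
      next
        case 2
        then show ?thesis unfolding K'_def
          by (auto intro!: exI[of _ "\<lambda>w. 0"] exI[of _ 1])
      qed
    qed
    have KK': "K \<subseteq> K'" unfolding K_def by (rule hull_minimal[where S=convex_cone, OF GK' ccK'])
    have disj: "K \<inter> Bt = {}"
    proof (rule ccontr)
      assume "K \<inter> Bt \<noteq> {}"
      then obtain x where "x \<in> K'" "x \<in> Bt" using KK' by blast
      then obtain p s e where x: "x = (\<Sum>z\<in>UNIV. p z *\<^sub>R \<Phi> (fst z) (snd z), \<Sum>z\<in>UNIV. p z, (\<Sum>z\<in>UNIV. p z * cr z) + s)"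
          "\<forall>z. 0 \<le> p z" "\<forall>z. z \<notin> F \<longrightarrow> p z = 0" "0 \<le> s" and xe: "x = (e, 1, t)" "e \<in> cbox a b"
        unfolding K'_def Bt_def by blast
      have pU: "p \<in> Uab \<Phi> a b"
        unfolding Uab_def dist_simplex_def feat_exp_def using x xe
        by (auto simp: case_prod_unfold mem_box_cart)
      have "exp_loss L h p = ereal (\<Sum>z\<in>UNIV. p z * cr z)"
        by (rule exp_loss_finite) (use x(3) lF in \<open>auto simp: l_def\<close>)
      also have "\<dots> \<le> ereal t" using x xe by simp
      also have "\<dots> < exp_loss L h pstar" by (rule tv)
      also have "\<dots> \<le> exp_loss L h p" using mn pU by blast
      finally show False by simp
    qed
    have "a \<in> cbox a b" using ab by (simp add: mem_box_cart)
    then have Bne: "Bt \<noteq> {}" unfolding Bt_def by blast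
    have cBt: "compact Bt" unfolding Bt_def
      by (rule compact_continuous_image) (auto intro!: continuous_intros)
    have vBt: "convex Bt"
    proof (rule convexI)
      fix x y u v assume xy: "x \<in> Bt" "y \<in> Bt" "0 \<le> u" "0 \<le> v" "u + v = (1::real)"
      then obtain e1 e2 where e: "e1 \<in> cbox a b" "e2 \<in> cbox a b" "x = (e1, 1, t)" "y = (e2, 1, t)"
        unfolding Bt_def by blast
      have "u *\<^sub>R e1 + v *\<^sub>R e2 \<in> cbox a b"
        using convexD[OF convex_box(1) e(1,2) xy(3,4,5)] .
      moreover have "u *\<^sub>R x + v *\<^sub>R y = (u *\<^sub>R e1 + v *\<^sub>R e2, 1, t)"
        using e xy(5) by (simp add: distrib_right[symmetric])
      ultimately show "u *\<^sub>R x + v *\<^sub>R y \<in> Bt" unfolding Bt_def by blast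
    qed
    obtain n \<beta> where sep: "\<forall>x\<in>K. inner n x < \<beta>" "\<forall>x\<in>Bt. inner n x > \<beta>"
      using separating_hyperplane_closed_compact[OF convK closedK vBt cBt Bne disj] by blast
    obtain n\<mu> nr nt where n: "n = (n\<mu>, nr, nt)" by (cases n) auto
    have beta: "0 < \<beta>" using sep(1) convex_cone_hull_contains_0[of G] unfolding K_def by force
    have Gle: "inner n g \<le> 0" if "g \<in> G" for g
    proof (rule ccontr)
      assume "\<not> inner n g \<le> 0"
      then have pos: "inner n g > 0" by simp
      have "(\<beta> / inner n g) *\<^sub>R g \<in> K" unfolding K_def
        by (rule convex_cone_hull_mul) (use that hull_subset[of G convex_cone] beta pos in auto)
      then have "inner n ((\<beta> / inner n g) *\<^sub>R g) < \<beta>" using sep(1) by blast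
      then show False using pos by simp
    qed
    have nt: "nt \<le> 0" using Gle[of "(0,0,1)"] unfolding G_def n by simp
    have nF: "n\<mu> \<bullet> \<Phi> (fst z) (snd z) + nr + nt * cr z \<le> 0" if "z \<in> F" for z
      using Gle[of "(\<Phi> (fst z) (snd z), 1, cr z)"] that unfolding G_def n by auto
    have nB: "\<beta> < n\<mu> \<bullet> e + nr + nt * t" if "\<forall>i. a$i \<le> e$i \<and> e$i \<le> b$i" for e
    proof -
      have "e \<in> cbox a b" using that by (simp add: mem_box_cart)
      then have "(e, 1, t) \<in> Bt" unfolding Bt_def by blast
      then have "\<beta> < inner (n\<mu>, nr, nt) (e, 1, t)" using sep(2) unfolding n by blast
      then show ?thesis by (simp add: add.assoc)
    qed
    show ?thesis
    proof (cases "nt < 0")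
      case True
      define s where "s = - nt"
      have s: "0 < s" using True s_def by simp
      show ?thesis
      proof (rule LP_lower_ge[where \<mu> = "(1/s) *\<^sub>R n\<mu>" and \<nu> = "nr / s"])
        show "\<forall>x y. ereal (\<Phi> x y \<bullet> ((1/s) *\<^sub>R n\<mu>) + nr / s) \<le> loss_pt L h x y"
        proof (intro allI)
          fix x y
          show "ereal (\<Phi> x y \<bullet> ((1/s) *\<^sub>R n\<mu>) + nr / s) \<le> loss_pt L h x y"
          proof (cases "(x,y) \<in> F")
            case True
            have "n\<mu> \<bullet> \<Phi> x y + nr \<le> s * cr (x,y)" using nF[OF True] s_def by simp
            then have "\<Phi> x y \<bullet> ((1/s) *\<^sub>R n\<mu>) + nr / s \<le> cr (x,y)"
              using s by (simp add: inner_commute field_simps)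
            then show ?thesis using lF[OF True] by (simp add: loss_pt_def l_def)
          next
            case False
            then show ?thesis using lnF[OF False] by (simp add: loss_pt_def l_def)
          qed
        qed
        show "\<forall>i. a$i \<le> b$i" by (rule ab)
        show "\<forall>e. (\<forall>i. a$i \<le> e$i \<and> e$i \<le> b$i) \<longrightarrow> t \<le> e \<bullet> ((1/s) *\<^sub>R n\<mu>) + nr / s"
        proof (intro allI impI)
          fix e :: "real^'m" assume "\<forall>i. a$i \<le> e$i \<and> e$i \<le> b$i"
          then have "\<beta> < n\<mu> \<bullet> e + nr - s * t" using nB s_def by simp
          then have "s * t < n\<mu> \<bullet> e + nr" using beta by simp
          then show "t \<le> e \<bullet> ((1/s) *\<^sub>R n\<mu>) + nr / s"
            using s by (simp add: inner_commute field_simps)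
        qed
      qed
    next
      case False
      then have nt0: "nt = 0" using nt by simp
      define \<nu>0 where "\<nu>0 = - (\<Sum>z\<in>F. \<bar>cr z\<bar>)"
      have nu0: "\<nu>0 \<le> cr z" if "z \<in> F" for z
      proof -
        have "\<bar>cr z\<bar> \<le> (\<Sum>z\<in>F. \<bar>cr z\<bar>)" by (rule member_le_sum) (use that in auto)
        then show ?thesis unfolding \<nu>0_def by simp
      qed
      define k where "k = \<bar>t - \<nu>0\<bar> / \<beta>"
      have k: "0 \<le> k" "k * \<beta> = \<bar>t - \<nu>0\<bar>" unfolding k_def using beta by auto
      show ?thesis
      proof (rule LP_lower_ge[where \<mu> = "k *\<^sub>R n\<mu>" and \<nu> = "\<nu>0 + k * nr"])
        show "\<forall>x y. ereal (\<Phi> x y \<bullet> (k *\<^sub>R n\<mu>) + (\<nu>0 + k * nr)) \<le> loss_pt L h x y"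
        proof (intro allI)
          fix x y
          show "ereal (\<Phi> x y \<bullet> (k *\<^sub>R n\<mu>) + (\<nu>0 + k * nr)) \<le> loss_pt L h x y"
          proof (cases "(x,y) \<in> F")
            case True
            have "n\<mu> \<bullet> \<Phi> x y + nr \<le> 0" using nF[OF True] nt0 by simp
            then have "k * (n\<mu> \<bullet> \<Phi> x y + nr) \<le> 0" using k(1) by (simp add: mult_nonneg_nonpos)
            then have "\<Phi> x y \<bullet> (k *\<^sub>R n\<mu>) + (\<nu>0 + k * nr) \<le> cr (x,y)"
              using nu0[OF True] by (simp add: inner_commute algebra_simps)
            then show ?thesis using lF[OF True] by (simp add: loss_pt_def l_def)
          next
            case False
            then show ?thesis using lnF[OF False] by (simp add: loss_pt_def l_def)
          qed
        qed
        show "\<forall>i. a$i \<le> b$i" by (rule ab)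
        show "\<forall>e. (\<forall>i. a$i \<le> e$i \<and> e$i \<le> b$i) \<longrightarrow> t \<le> e \<bullet> (k *\<^sub>R n\<mu>) + (\<nu>0 + k * nr)"
        proof (intro allI impI)
          fix e :: "real^'m" assume "\<forall>i. a$i \<le> e$i \<and> e$i \<le> b$i"
          then have "\<beta> < n\<mu> \<bullet> e + nr" using nB nt0 by simp
          then have "k * \<beta> \<le> k * (n\<mu> \<bullet> e + nr)" using k(1) by (intro mult_left_mono) auto
          then have "\<bar>t - \<nu>0\<bar> \<le> k * (n\<mu> \<bullet> e + nr)" using k(2) by simp
          then show "t \<le> e \<bullet> (k *\<^sub>R n\<mu>) + (\<nu>0 + k * nr)"
            by (simp add: inner_commute algebra_simps)
        qed
      qed
    qed
  qed
  show ?thesis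
  proof (rule dense_le)
    fix x assume "x < exp_loss L h pstar"
    then show "x \<le> LP_lower L \<Phi> a b h" using claim by (cases x) auto
  qed
qed



lemma compact_simplex: "compact (dist_simplex :: ('y::finite \<Rightarrow> real) set)"
proof -
  define D' where "D' = {v::real^'y. (\<forall>i. 0 \<le> v$i) \<and> (\<Sum>i\<in>UNIV. v$i) = 1}"
  have cl: "closed D'" unfolding D'_def
    by (intro closed_Collect_conj closed_Collect_all closed_Collect_le closed_Collect_eq continuous_intros)
  have "D' \<subseteq> cbox 0 1"
  proof
    fix v assume v: "v \<in> D'"
    have "v$i \<le> 1" for i
    proof -
      have "v$i \<le> (\<Sum>i\<in>UNIV. v$i)" by (rule member_le_sum) (use v D'_def in auto)
      then show ?thesis using v D'_def by simp
    qed
    then show "v \<in> cbox 0 1" using v D'_def by (simp add: mem_box_cart)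
  qed
  then have bd: "bounded D'" using bounded_cbox bounded_subset by blast
  have cD: "compact D'" using cl bd by (simp add: compact_eq_bounded_closed)
  have im: "dist_simplex = (\<lambda>v i. v$i) ` D'"
  proof
    show "dist_simplex \<subseteq> (\<lambda>v i. v$i) ` D'"
    proof
      fix p :: "'y \<Rightarrow> real" assume "p \<in> dist_simplex"
      then have "(\<chi> i. p i) \<in> D'" "p = (\<lambda>i. (\<chi> i. p i) $ i)" unfolding D'_def dist_simplex_def by auto
      then show "p \<in> (\<lambda>v i. v$i) ` D'" by blast
    qed
    show "(\<lambda>v i. v$i) ` D' \<subseteq> dist_simplex" unfolding D'_def dist_simplex_def by auto
  qed
  have "continuous_on D' (\<lambda>v i. v$i)"
    by (intro continuous_on_coordinatewise_then_product continuous_intros)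
  then show ?thesis unfolding im by (rule compact_continuous_image[OF _ cD])
qed

lemma score_lower_bound1:
  fixes L :: "('y::finite \<Rightarrow> real) \<Rightarrow> 'y \<Rightarrow> ereal"
  assumes "score_function L"
  shows "\<exists>B::real. \<forall>q\<in>dist_simplex. ereal B \<le> L q y"
proof -
  have nm: "\<forall>q\<in>dist_simplex. L q y \<noteq> -\<infinity>" and
    lsc: "\<forall>q\<in>dist_simplex. \<forall>c. c < L q y \<longrightarrow> eventually (\<lambda>r. c < L r y) (at q within dist_simplex)"
    using assms unfolding score_function_def by auto
  define c where "c q = (if L q y = \<infinity> then 0 else real_of_ereal (L q y) - 1)" for q :: "'y \<Rightarrow> real"
  have cl: "ereal (c q) < L q y" if "q \<in> dist_simplex" for q
    using nm that unfolding c_def by (cases "L q y") auto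
  have "\<forall>q\<in>(dist_simplex :: ('y \<Rightarrow> real) set). \<exists>S. open S \<and> q \<in> S \<and> (\<forall>r\<in>S. r \<in> dist_simplex \<longrightarrow> ereal (c q) < L r y)"
  proof
    fix q :: "'y \<Rightarrow> real" assume q: "q \<in> dist_simplex"
    have "eventually (\<lambda>r. ereal (c q) < L r y) (at q within dist_simplex)" using lsc q cl by blast
    then obtain S where S: "open S" "q \<in> S" "\<forall>x\<in>S. x \<noteq> q \<longrightarrow> x \<in> dist_simplex \<longrightarrow> ereal (c q) < L x y"
      unfolding eventually_at_topological by blast
    show "\<exists>S. open S \<and> q \<in> S \<and> (\<forall>r\<in>S. r \<in> dist_simplex \<longrightarrow> ereal (c q) < L r y)"
      using S cl[OF q] by (intro exI[of _ S]) auto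
  qed
  then obtain Op where O: "\<forall>q\<in>(dist_simplex :: ('y \<Rightarrow> real) set). open (Op q) \<and> q \<in> Op q \<and> (\<forall>r\<in>Op q. r \<in> dist_simplex \<longrightarrow> ereal (c q) < L r y)"
    by metis
  obtain C' where C': "C' \<subseteq> (dist_simplex :: ('y \<Rightarrow> real) set)" "finite C'" "dist_simplex \<subseteq> (\<Union>q\<in>C'. Op q)"
    by (rule compactE_image[OF compact_simplex, of dist_simplex Op]) (use O in auto)
  define B where "B = Min (insert 0 (c ` C'))"
  show ?thesis
  proof (intro exI ballI)
    fix r :: "'y \<Rightarrow> real" assume r: "r \<in> dist_simplex"
    then obtain q where q: "q \<in> C'" "r \<in> Op q" using C' by blast
    have "B \<le> c q" unfolding B_def using q C' by (intro Min_le) auto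
    then have "ereal B \<le> ereal (c q)" by simp
    also have "\<dots> < L r y" using O q C' r by blast
    finally show "ereal B \<le> L r y" by simp
  qed
qed

lemma score_lower_bound:
  assumes "score_function (L :: ('y::finite \<Rightarrow> real) \<Rightarrow> 'y \<Rightarrow> ereal)"
  shows "\<exists>B::real. \<forall>y. \<forall>q\<in>dist_simplex. ereal B \<le> L q y"
proof -
  obtain Bf where Bf: "\<forall>y. \<forall>q\<in>dist_simplex. ereal (Bf y) \<le> L q y"
    using score_lower_bound1[OF assms] by metis
  show ?thesis
  proof (intro exI allI ballI)
    fix y q assume "q \<in> (dist_simplex :: ('y \<Rightarrow> real) set)"
    have "Min (range Bf) \<le> Bf y" by (rule Min_le) auto
    then have "ereal (Min (range Bf)) \<le> ereal (Bf y)" by simp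
    also have "\<dots> \<le> L q y" using Bf \<open>q \<in> dist_simplex\<close> by blast
    finally show "ereal (Min (range Bf)) \<le> L q y" .
  qed
qed



lemma Tinner: "(\<chi> z. p z) \<bullet> (w :: real^'n) = (\<Sum>z\<in>UNIV. p z * w$z)"
  by (simp add: inner_vec_def)

lemma U_vec_closed_bounded:
  fixes \<Phi> :: "'x::finite \<Rightarrow> 'y::finite \<Rightarrow> real^'m"
  shows "compact ((\<lambda>p. \<chi> z. p z) ` Uab \<Phi> a b :: (real^('x \<times> 'y)) set)"
proof -
  define V where "V = {v::real^('x \<times> 'y). (\<forall>z. 0 \<le> v$z) \<and> (\<Sum>z\<in>UNIV. v$z) = 1 \<and>
     (\<forall>i. a$i \<le> (\<Sum>z\<in>UNIV. v$z * \<Phi> (fst z) (snd z) $ i) \<and> (\<Sum>z\<in>UNIV. v$z * \<Phi> (fst z) (snd z) $ i) \<le> b$i)}"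
  have eq: "(\<lambda>p. \<chi> z. p z) ` Uab \<Phi> a b = V"
  proof
    show "(\<lambda>p. \<chi> z. p z) ` Uab \<Phi> a b \<subseteq> V"
      unfolding V_def Uab_def dist_simplex_def by (auto simp: feat_exp_nth)
    show "V \<subseteq> (\<lambda>p. \<chi> z. p z) ` Uab \<Phi> a b"
    proof
      fix v assume v: "v \<in> V"
      have "(\<lambda>z. v$z) \<in> Uab \<Phi> a b" using v unfolding V_def Uab_def dist_simplex_def by (auto simp: feat_exp_nth)
      moreover have "v = (\<chi> z. (\<lambda>z. v$z) z)" by simp
      ultimately show "v \<in> (\<lambda>p. \<chi> z. p z) ` Uab \<Phi> a b" by blast
    qed
  qed
  have cl: "closed V" unfolding V_def
    by (intro closed_Collect_conj closed_Collect_all closed_Collect_le closed_Collect_eq continuous_intros)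
  have "V \<subseteq> cbox 0 1"
  proof
    fix v assume v: "v \<in> V"
    have "v$i \<le> 1" for i
    proof -
      have "v$i \<le> (\<Sum>i\<in>UNIV. v$i)" by (rule member_le_sum) (use v V_def in auto)
      then show ?thesis using v V_def by simp
    qed
    then show "v \<in> cbox 0 1" using v V_def by (simp add: mem_box_cart)
  qed
  then have bd: "bounded V" using bounded_cbox bounded_subset by blast
  show ?thesis unfolding eq using cl bd by (simp add: compact_eq_bounded_closed)
qed

lemma minimax:
  fixes \<Phi> :: "'x::finite \<Rightarrow> 'y::finite \<Rightarrow> real^'m"
    and L :: "('y \<Rightarrow> real) \<Rightarrow> 'y \<Rightarrow> ereal"
  assumes sf: "score_function L" and mrc: "is_MRC L (Uab \<Phi> a b) h" and U: "pstar \<in> Uab \<Phi> a b"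
  shows "worst_loss L (Uab \<Phi> a b) h \<le> entropy_set L (Uab \<Phi> a b)"
proof (rule ccontr)
  define U where "U = Uab \<Phi> a b"
  define W where "W = worst_loss L U h"
  have hW: "W \<le> worst_loss L U h'" if "h' \<in> rules" for h'
    using mrc that unfolding is_MRC_def W_def U_def by blast
  assume "\<not> worst_loss L (Uab \<Phi> a b) h \<le> entropy_set L (Uab \<Phi> a b)"
  then have lt: "entropy_set L U < W" unfolding U_def W_def by simp
  obtain \<alpha>1 where a1: "entropy_set L U < ereal \<alpha>1" "ereal \<alpha>1 < W" using ereal_dense2[OF lt] by blast
  obtain \<alpha> where a2: "ereal \<alpha>1 < ereal \<alpha>" "ereal \<alpha> < W" using ereal_dense2[OF a1(2)] by blast
  have a12: "\<alpha>1 < \<alpha>" using a2 by simp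
  define l where "l h' z = L (h' (fst z)) (snd z)" for h' :: "'x \<Rightarrow> 'y \<Rightarrow> real" and z :: "'x \<times> 'y"
  have notm: "l h' z \<noteq> -\<infinity>" if "h' \<in> rules" for h' z
    using sf that unfolding score_function_def rules_def l_def by auto
  obtain B where B: "\<forall>y. \<forall>q\<in>dist_simplex. ereal B \<le> L q y" using score_lower_bound[OF sf] by blast
  have lB: "ereal B \<le> l h' z" if "h' \<in> rules" for h' z
    using B that unfolding rules_def l_def by auto
  have Uprop: "\<forall>z. 0 \<le> p z" "(\<Sum>z\<in>UNIV. p z) = 1" if "p \<in> U" for p
    using that unfolding U_def Uab_def dist_simplex_def by auto
  define S where "S = {z. \<exists>p\<in>U. 0 < p z}"
  have supp: "p z = 0" if "p \<in> U" "z \<notin> S" for p z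
  proof -
    have a: "\<not> 0 < p z" using that unfolding S_def by blast
    have b: "0 \<le> p z" using Uprop(1)[OF that(1)] by blast
    show ?thesis using a b by linarith
  qed
  have Sne: "S \<noteq> {}"
  proof
    assume "S = {}"
    then have "\<forall>z. pstar z = 0" using supp U unfolding U_def by auto
    then have "(\<Sum>z\<in>UNIV. pstar z) = 0" by (intro sum.neutral) blast
    moreover have "(\<Sum>z\<in>UNIV. pstar z) = 1" using Uprop(2)[of pstar] U unfolding U_def by blast
    ultimately show False by simp
  qed
  have finS: "finite S" by simp
  have "\<forall>z\<in>S. \<exists>p. p \<in> U \<and> 0 < p z" unfolding S_def by blast
  then obtain P where P: "\<forall>z\<in>S. P z \<in> U \<and> 0 < P z z" using bchoice[of S "\<lambda>z p. p \<in> U \<and> 0 < p z"] by blast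
  define pb where "pb w = (\<Sum>z\<in>S. (1 / real (card S)) * P z w)" for w
  have cS: "0 < card S" using Sne finS card_gt_0_iff by blast
  have pbU: "pb \<in> U"
    unfolding pb_def U_def
    by (rule Uab_comb) (use P cS in \<open>auto simp: U_def\<close>)
  have pbpos: "0 < pb z" if "z \<in> S" for z
  proof -
    have "(1 / real (card S)) * P z z \<le> pb z" unfolding pb_def
    proof (rule member_le_sum[of z S "\<lambda>z'. (1 / real (card S)) * P z' z"])
      fix z' assume z': "z' \<in> S - {z}"
      then have "P z' \<in> U" using P by blast
      then have "0 \<le> P z' z" using Uprop(1) by blast
      then show "0 \<le> (1 / real (card S)) * P z' z" by simp
    qed (use that in auto)
    moreover have "0 < (1 / real (card S)) * P z z" using P that cS by simp
    ultimately show ?thesis by linarith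
  qed
  have Linf: "exp_loss L h' p = \<infinity>" if "p \<in> U" "\<forall>z\<in>S. 0 < p z" "h' \<in> rules" "z \<in> S" "l h' z = \<infinity>" for p h' z
    by (rule exp_loss_inf[of L h' p z]) (use that notm Uprop in \<open>auto simp: l_def\<close>)
  have ent: "ereal \<alpha>1 \<le> entropy_set L U" if "p \<in> U" "\<forall>h'\<in>rules. ereal \<alpha>1 \<le> exp_loss L h' p" for p
  proof -
    have "ereal \<alpha>1 \<le> entropy L p" unfolding entropy_def by (rule INF_greatest) (use that in auto)
    also have "\<dots> \<le> entropy_set L U" unfolding entropy_set_def by (rule SUP_upper[OF that(1)])
    finally show ?thesis .
  qed
  define C where "C = {w::real^('x \<times> 'y). \<exists>h'\<in>rules. \<forall>z\<in>S. l h' z \<le> ereal (w$z)}"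
  have finite_case: "\<exists>w\<in>C. \<forall>z\<in>S. l h' z = ereal (w$z)" if "h' \<in> rules" "\<forall>z\<in>S. l h' z \<noteq> \<infinity>" for h'
  proof -
    define w where "w = ((\<chi> z. real_of_ereal (l h' z)) :: real^('x \<times> 'y))"
    have "\<forall>z\<in>S. l h' z = ereal (w$z)"
    proof
      fix z assume z: "z \<in> S"
      have "l h' z \<noteq> \<infinity>" "l h' z \<noteq> -\<infinity>" using that z notm[OF that(1)] by auto
      then show "l h' z = ereal (w$z)" unfolding w_def by (cases "l h' z") auto
    qed
    then have "\<forall>z\<in>S. l h' z \<le> ereal (w$z)" by simp
    then have "w \<in> C" unfolding C_def using that(1) by blast
    then show ?thesis using \<open>\<forall>z\<in>S. l h' z = ereal (w$z)\<close> by blast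
  qed
  show False
  proof (cases "C = {}")
    case True
    have "\<forall>h'\<in>rules. ereal \<alpha>1 \<le> exp_loss L h' pb"
    proof
      fix h' :: "'x \<Rightarrow> 'y \<Rightarrow> real" assume hr: "h' \<in> rules"
      have "\<exists>z\<in>S. l h' z = \<infinity>" using finite_case[OF hr] True by blast
      then obtain z where "z \<in> S" "l h' z = \<infinity>" by blast
      then have "exp_loss L h' pb = \<infinity>" using Linf[OF pbU _ hr] pbpos by blast
      then show "ereal \<alpha>1 \<le> exp_loss L h' pb" by simp
    qed
    then show False using ent[OF pbU] a1(1) by simp
  next
    case False
    define T where "T p = ((\<chi> z. p z) :: real^('x \<times> 'y))" for p :: "'x \<times> 'y \<Rightarrow> real"
    define one where "one = ((\<chi> z. 1) :: real^('x \<times> 'y))"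
    define D where "D = {w::real^('x \<times> 'y). \<forall>p\<in>U. T p \<bullet> w < \<alpha>}"
    have Tone: "T p \<bullet> (c *\<^sub>R one) = c" if "p \<in> U" for p c
    proof -
      have "T p \<bullet> (c *\<^sub>R one) = c * (\<Sum>z\<in>UNIV. p z)" unfolding T_def one_def by (simp add: Tinner)
      then show ?thesis using Uprop(2)[OF that] by simp
    qed
    have Tone1: "T p \<bullet> one = 1" if "p \<in> U" for p using Tone[OF that, of 1] by simp
    have Tw: "T p \<bullet> w = (\<Sum>z\<in>UNIV. p z * w$z)" for p w unfolding T_def by (rule Tinner)
    have convC: "convex C"
    proof (rule convexI)
      fix w1 w2 :: "real^('x \<times> 'y)" and u v :: real
      assume as: "w1 \<in> C" "w2 \<in> C" "0 \<le> u" "0 \<le> v" "u + v = 1"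
      then obtain h1 h2 where h1: "h1 \<in> rules" "\<forall>z\<in>S. l h1 z \<le> ereal (w1$z)"
        and h2: "h2 \<in> rules" "\<forall>z\<in>S. l h2 z \<le> ereal (w2$z)" unfolding C_def by blast
      define h3 where "h3 x y' = (1 - v) * h1 x y' + v * h2 x y'" for x y'
      have v1: "v \<le> 1" using as by simp
      have h3r: "h3 \<in> rules"
      proof -
        have "h3 x \<in> dist_simplex" for x
        proof -
          have d1: "h1 x \<in> dist_simplex" "h2 x \<in> dist_simplex" using h1 h2 unfolding rules_def by auto
          then have "(\<Sum>y'\<in>UNIV. h3 x y') = (1 - v) * (\<Sum>y'\<in>UNIV. h1 x y') + v * (\<Sum>y'\<in>UNIV. h2 x y')"
            unfolding h3_def by (simp add: sum.distrib sum_distrib_left)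
          then show ?thesis using d1 as v1 unfolding dist_simplex_def h3_def by (auto intro!: add_nonneg_nonneg)
        qed
        then show ?thesis unfolding rules_def by auto
      qed
      have "\<forall>z\<in>S. l h3 z \<le> ereal ((u *\<^sub>R w1 + v *\<^sub>R w2)$z)"
      proof
        fix z assume z: "z \<in> S"
        have d1: "h1 (fst z) \<in> dist_simplex" "h2 (fst z) \<in> dist_simplex" using h1 h2 unfolding rules_def by auto
        have "l h3 z = L (\<lambda>y'. (1 - v) * h1 (fst z) y' + v * h2 (fst z) y') (snd z)"
          unfolding l_def h3_def by simp
        also have "\<dots> \<le> ereal (1 - v) * L (h1 (fst z)) (snd z) + ereal v * L (h2 (fst z)) (snd z)"
          using sf d1 as v1 unfolding score_function_def by blast
        also have "\<dots> \<le> ereal (1 - v) * ereal (w1$z) + ereal v * ereal (w2$z)"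
          using h1(2) h2(2) z v1 as unfolding l_def
          by (intro add_mono ereal_mult_left_mono) auto
        also have "\<dots> = ereal ((u *\<^sub>R w1 + v *\<^sub>R w2)$z)"
        proof -
          have u: "u = 1 - v" using as by simp
          show ?thesis unfolding u by simp
        qed
        finally show "l h3 z \<le> ereal ((u *\<^sub>R w1 + v *\<^sub>R w2)$z)" .
      qed
      then show "u *\<^sub>R w1 + v *\<^sub>R w2 \<in> C" unfolding C_def using h3r by blast
    qed
    have convD: "convex D"
    proof (rule convexI)
      fix w1 w2 :: "real^('x \<times> 'y)" and u v :: real
      assume as: "w1 \<in> D" "w2 \<in> D" "0 \<le> u" "0 \<le> v" "u + v = 1"
      show "u *\<^sub>R w1 + v *\<^sub>R w2 \<in> D" unfolding D_def
      proof (intro CollectI ballI)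
        fix p assume p: "p \<in> U"
        have "T p \<bullet> (u *\<^sub>R w1 + v *\<^sub>R w2) = u * (T p \<bullet> w1) + v * (T p \<bullet> w2)"
          by (simp add: inner_add_right)
        also have "\<dots> < \<alpha>" using as p unfolding D_def by (intro convex_bound_lt) auto
        finally show "T p \<bullet> (u *\<^sub>R w1 + v *\<^sub>R w2) < \<alpha>" .
      qed
    qed
    have Dne: "D \<noteq> {}"
    proof -
      have "(\<alpha> - 1) *\<^sub>R one \<in> D" unfolding D_def
      proof (intro CollectI ballI)
        fix p assume "p \<in> U"
        then show "T p \<bullet> ((\<alpha> - 1) *\<^sub>R one) < \<alpha>" using Tone1[of p] by simp
      qed
      then show ?thesis by blast
    qed
    have leW: "exp_loss L h' p \<le> ereal (T p \<bullet> w)" if "h' \<in> rules" "\<forall>z\<in>S. l h' z \<le> ereal (w$z)" "p \<in> U" for h' w p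
    proof -
      have "exp_loss L h' p = (\<Sum>z\<in>UNIV. ereal (p z) * l h' z)" unfolding exp_loss_alt l_def ..
      also have "\<dots> \<le> (\<Sum>z\<in>UNIV. ereal (p z * w$z))"
      proof (rule sum_mono)
        fix z
        show "ereal (p z) * l h' z \<le> ereal (p z * w$z)"
        proof (cases "z \<in> S")
          case True
          have "ereal (p z) * l h' z \<le> ereal (p z) * ereal (w$z)"
          proof -
            have pz: "0 \<le> p z" using Uprop(1)[OF that(3)] by blast
            show ?thesis using that True pz by (intro ereal_mult_left_mono) auto
          qed
          then show ?thesis by simp
        next
          case False
          then show ?thesis using supp[OF that(3) False] by (simp add: zero_ereal_def[symmetric])
        qed
      qed
      also have "\<dots> = ereal (T p \<bullet> w)" by (simp add: Tw)
      finally show ?thesis .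
    qed
    have disj: "D \<inter> C = {}"
    proof (rule ccontr)
      assume "D \<inter> C \<noteq> {}"
      then obtain w h' where w: "w \<in> D" "h' \<in> rules" "\<forall>z\<in>S. l h' z \<le> ereal (w$z)" unfolding C_def by blast
      have "worst_loss L U h' \<le> ereal \<alpha>" unfolding worst_loss_def
      proof (rule SUP_least)
        fix p assume p: "p \<in> U"
        have "exp_loss L h' p \<le> ereal (T p \<bullet> w)" by (rule leW[OF w(2,3) p])
        also have "\<dots> \<le> ereal \<alpha>" using w(1) p unfolding D_def by (simp add: less_imp_le)
        finally show "exp_loss L h' p \<le> ereal \<alpha>" .
      qed
      then have "W \<le> ereal \<alpha>" using hW[OF w(2)] by simp
      then show False using a2(2) by simp
    qed
    obtain n c where n: "n \<noteq> 0" "\<forall>x\<in>D. inner n x \<le> c" "\<forall>x\<in>C. c \<le> inner n x"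
      using separating_hyperplane_sets[OF convD convC Dne False disj] by blast
    define U' where "U' = T ` U"
    have U'eq: "U' = (\<lambda>p. \<chi> z. p z) ` Uab \<Phi> a b" unfolding U'_def T_def U_def by simp
    have cU': "compact U'" unfolding U'eq by (rule U_vec_closed_bounded)
    have vU': "convex U'"
    proof (rule convexI)
      fix x y :: "real^('x \<times> 'y)" and u v :: real
      assume as: "x \<in> U'" "y \<in> U'" "0 \<le> u" "0 \<le> v" "u + v = 1"
      then obtain p q where pq: "p \<in> U" "q \<in> U" "x = T p" "y = T q" unfolding U'_def by blast
      have "(\<lambda>z. (1 - v) * p z + v * q z) \<in> U" using Uab_conv2[of p \<Phi> a b q v] pq as unfolding U_def by simp
      moreover have "u *\<^sub>R x + v *\<^sub>R y = T (\<lambda>z. (1 - v) * p z + v * q z)"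
      proof -
        have u: "u = 1 - v" using as by simp
        show ?thesis using pq unfolding T_def u by (simp add: vec_eq_iff)
      qed
      ultimately show "u *\<^sub>R x + v *\<^sub>R y \<in> U'" unfolding U'_def by blast
    qed
    have z0: "0 \<notin> U'"
    proof
      assume "0 \<in> U'"
      then obtain p where p: "p \<in> U" "T p = 0" unfolding U'_def by auto
      have "T p \<bullet> (1 *\<^sub>R one) = 1" by (rule Tone[OF p(1)])
      then show False using p(2) by simp
    qed
    define K where "K = conic hull U'"
    have clK: "closed K" unfolding K_def using closed_conic_hull_strong cU' z0 by blast
    have cvK: "convex K" unfolding K_def by (rule convex_conic_hull[OF vU'])
    have nK: "n \<in> K"
    proof (rule ccontr)
      assume nn: "n \<notin> K"
      obtain d \<beta> where d: "inner d n < \<beta>" "\<forall>x\<in>K. \<beta> < inner d x"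
        using separating_hyperplane_closed_point[OF cvK clK nn] by blast
      have "0 \<in> K" unfolding K_def using pbU unfolding U'_def by auto
      then have b0: "\<beta> < 0" using d(2) by force
      have dpos: "0 \<le> inner d (T p)" if "p \<in> U" for p
      proof (rule ccontr)
        assume "\<not> 0 \<le> inner d (T p)"
        then have neg: "inner d (T p) < 0" by simp
        have "T p \<in> U'" unfolding U'_def using that by blast
        then have "(\<beta> / inner d (T p)) *\<^sub>R T p \<in> K" unfolding K_def
          using b0 neg by (intro conic_mul[OF conic_conic_hull] hull_inc) (auto simp: divide_nonpos_neg)
        then have "\<beta> < inner d ((\<beta> / inner d (T p)) *\<^sub>R T p)" using d(2) by blast
        then show False using neg by simp
      qed
      define k where "k = (\<bar>c\<bar> + \<bar>(\<alpha> - 1) * inner n one\<bar> + 1) / (- inner d n)"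
      have dn: "inner d n < 0" using d(1) b0 by simp
      have k0: "0 \<le> k" unfolding k_def using dn by (intro divide_nonneg_pos) auto
      have kd: "k * (- inner d n) = \<bar>c\<bar> + \<bar>(\<alpha> - 1) * inner n one\<bar> + 1" unfolding k_def using dn by simp
      have "(\<alpha> - 1) *\<^sub>R one - k *\<^sub>R d \<in> D" unfolding D_def
      proof (intro CollectI ballI)
        fix p assume p: "p \<in> U"
        have "T p \<bullet> ((\<alpha> - 1) *\<^sub>R one - k *\<^sub>R d) = (\<alpha> - 1) - k * (T p \<bullet> d)"
          using Tone1[OF p] by (simp add: inner_diff_right)
        also have "\<dots> \<le> \<alpha> - 1" using k0 dpos[OF p] by (simp add: inner_commute)
        finally show "T p \<bullet> ((\<alpha> - 1) *\<^sub>R one - k *\<^sub>R d) < \<alpha>" by simp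
      qed
      then have "inner n ((\<alpha> - 1) *\<^sub>R one - k *\<^sub>R d) \<le> c" using n(2) by blast
      moreover have "inner n ((\<alpha> - 1) *\<^sub>R one - k *\<^sub>R d) = (\<alpha> - 1) * inner n one + k * (- inner d n)"
        by (simp add: inner_diff_right inner_commute)
      ultimately show False using kd by linarith
    qed
    then obtain \<gamma> ph where ph: "n = \<gamma> *\<^sub>R T ph" "0 \<le> \<gamma>" "ph \<in> U"
      unfolding K_def conic_hull_explicit U'_def by blast
    have g0: "0 < \<gamma>" using ph n(1) by (cases "\<gamma> = 0") auto
    have ninner: "inner n w = \<gamma> * (T ph \<bullet> w)" for w using ph(1) by simp
    have cg: "\<gamma> * \<alpha> \<le> c"
    proof (rule ccontr)
      assume "\<not> \<gamma> * \<alpha> \<le> c"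
      then have gc: "c / \<gamma> < \<alpha>" using g0 by (simp add: divide_less_eq mult.commute)
      define \<beta>0 where "\<beta>0 = (c / \<gamma> + \<alpha>) / 2"
      have "\<beta>0 *\<^sub>R one \<in> D" unfolding D_def
      proof (intro CollectI ballI)
        fix p assume "p \<in> U"
        then show "T p \<bullet> (\<beta>0 *\<^sub>R one) < \<alpha>" using Tone1[of p] gc unfolding \<beta>0_def by simp
      qed
      then have "inner n (\<beta>0 *\<^sub>R one) \<le> c" using n(2) by blast
      then have "\<gamma> * \<beta>0 \<le> c" using Tone1[OF ph(3)] ninner by (simp add: mult.commute)
      moreover have "c < \<gamma> * \<beta>0" using gc g0 unfolding \<beta>0_def by (simp add: field_simps)
      ultimately show False by simp
    qed
    have phC: "\<alpha> \<le> T ph \<bullet> w" if "w \<in> C" for w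
    proof -
      have "c \<le> inner n w" using n(3) that by blast
      then have "\<gamma> * \<alpha> \<le> \<gamma> * (T ph \<bullet> w)" using cg ninner[of w] by linarith
      then show ?thesis using g0 by simp
    qed
    define \<epsilon> where "\<epsilon> = (if \<alpha> \<le> B then 1/2 else min (1/2) ((\<alpha> - \<alpha>1) / (\<alpha> - B)))"
    have e0: "0 < \<epsilon>" "\<epsilon> \<le> 1" unfolding \<epsilon>_def using a12 by auto
    have eB: "\<epsilon> * (\<alpha> - B) \<le> \<alpha> - \<alpha>1"
    proof (cases "\<alpha> \<le> B")
      case True
      then have "\<epsilon> * (\<alpha> - B) \<le> 0" using e0 by (simp add: mult_nonneg_nonpos)
      then show ?thesis using a12 by simp
    next
      case False
      then have "\<epsilon> \<le> (\<alpha> - \<alpha>1) / (\<alpha> - B)" unfolding \<epsilon>_def by simp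
      then show ?thesis using False by (simp add: le_divide_eq)
    qed
    define pt where "pt z = (1 - \<epsilon>) * ph z + \<epsilon> * pb z" for z
    have ptU: "pt \<in> U" unfolding pt_def using Uab_conv2[of ph \<Phi> a b pb \<epsilon>] ph(3) pbU e0 unfolding U_def by simp
    have ptpos: "\<forall>z\<in>S. 0 < pt z"
    proof
      fix z assume z: "z \<in> S"
      have "0 \<le> ph z" using Uprop(1)[OF ph(3)] by blast
      then have "0 \<le> (1 - \<epsilon>) * ph z" using e0 by simp
      moreover have "0 < \<epsilon> * pb z" using e0 pbpos[OF z] by simp
      ultimately show "0 < pt z" unfolding pt_def by simp
    qed
    have "\<forall>h'\<in>rules. ereal \<alpha>1 \<le> exp_loss L h' pt"
    proof
      fix h' :: "'x \<Rightarrow> 'y \<Rightarrow> real" assume hr: "h' \<in> rules"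
      show "ereal \<alpha>1 \<le> exp_loss L h' pt"
      proof (cases "\<exists>z\<in>S. l h' z = \<infinity>")
        case True
        then obtain z where "z \<in> S" "l h' z = \<infinity>" by blast
        then have "exp_loss L h' pt = \<infinity>" using Linf[OF ptU ptpos hr] by blast
        then show ?thesis by simp
      next
        case False
        then obtain w where w: "w \<in> C" "\<forall>z\<in>S. l h' z = ereal (w$z)" using finite_case[OF hr] by blast
        have "exp_loss L h' pt = ereal (\<Sum>z\<in>UNIV. pt z * w$z)"
        proof (rule exp_loss_finite)
          fix z assume "pt z \<noteq> 0"
          then have "z \<in> S" using supp[OF ptU] by blast
          then show "L (h' (fst z)) (snd z) = ereal (w$z)" using w(2) unfolding l_def by blast
        qed
        also have "(\<Sum>z\<in>UNIV. pt z * w$z) = (1 - \<epsilon>) * (T ph \<bullet> w) + \<epsilon> * (\<Sum>z\<in>UNIV. pb z * w$z)"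
        proof -
          have "(\<Sum>z\<in>UNIV. pt z * w$z) = (\<Sum>z\<in>UNIV. (1 - \<epsilon>) * (ph z * w$z) + \<epsilon> * (pb z * w$z))"
            by (rule sum.cong) (simp_all add: pt_def algebra_simps)
          also have "\<dots> = (1 - \<epsilon>) * (\<Sum>z\<in>UNIV. ph z * w$z) + \<epsilon> * (\<Sum>z\<in>UNIV. pb z * w$z)"
            by (simp add: sum.distrib sum_distrib_left)
          finally show ?thesis by (simp add: Tw)
        qed
        finally have el: "exp_loss L h' pt = ereal ((1 - \<epsilon>) * (T ph \<bullet> w) + \<epsilon> * (\<Sum>z\<in>UNIV. pb z * w$z))" .
        have "(\<Sum>z\<in>UNIV. pb z * B) \<le> (\<Sum>z\<in>UNIV. pb z * w$z)"
        proof (rule sum_mono)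
          fix z
          show "pb z * B \<le> pb z * w$z"
          proof (cases "z \<in> S")
            case True
            have "ereal B \<le> ereal (w$z)" using lB[OF hr, of z] w(2) True by simp
            moreover have "0 \<le> pb z" using Uprop(1)[OF pbU] by blast
            ultimately show ?thesis by (intro mult_left_mono) auto
          next
            case False
            then show ?thesis using supp[OF pbU False] by simp
          qed
        qed
        then have pbw: "B \<le> (\<Sum>z\<in>UNIV. pb z * w$z)" using Uprop(2)[OF pbU] by (simp add: sum_distrib_right[symmetric])
        have "(1 - \<epsilon>) * \<alpha> \<le> (1 - \<epsilon>) * (T ph \<bullet> w)" using phC[OF w(1)] e0 by (intro mult_left_mono) auto
        moreover have "\<epsilon> * B \<le> \<epsilon> * (\<Sum>z\<in>UNIV. pb z * w$z)" using pbw e0 by (intro mult_left_mono) auto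
        ultimately have "\<alpha>1 \<le> (1 - \<epsilon>) * (T ph \<bullet> w) + \<epsilon> * (\<Sum>z\<in>UNIV. pb z * w$z)"
          using eB by (simp add: algebra_simps)
        then show ?thesis using el by simp
      qed
    qed
    then show False using ent[OF ptU] a1(1) by simp
  qed
qed


theorem theorem3:
  fixes L :: "('y::finite \<Rightarrow> real) \<Rightarrow> 'y \<Rightarrow> ereal"
    and \<Phi> :: "'x::finite \<Rightarrow> 'y \<Rightarrow> real^'m"
    and a b :: "real^'m"
    and h :: "'x \<Rightarrow> 'y \<Rightarrow> real"
    and pstar :: "'x \<times> 'y \<Rightarrow> real"
  assumes "score_function L"
    and "Uab \<Phi> a b \<noteq> {}"
    and "is_MRC L (Uab \<Phi> a b) h"
    and "pstar \<in> Uab \<Phi> a b"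
  shows "LP_lower L \<Phi> a b h \<le> exp_loss L h pstar
       \<and> exp_loss L h pstar \<le> entropy_set L (Uab \<Phi> a b)
       \<and> ((\<forall>p\<in>Uab \<Phi> a b. entropy L p \<le> entropy L pstar)
            \<longrightarrow> exp_loss L h pstar = entropy_set L (Uab \<Phi> a b))
       \<and> ((\<forall>p\<in>Uab \<Phi> a b. exp_loss L h pstar \<le> exp_loss L h p)
            \<longrightarrow> exp_loss L h pstar = LP_lower L \<Phi> a b h)"
proof -
  have hr: "h \<in> rules" using assms(3) unfolding is_MRC_def by blast
  have P1: "LP_lower L \<Phi> a b h \<le> exp_loss L h pstar" by (rule LP_lower_le[OF assms(4)])
  have "exp_loss L h pstar \<le> worst_loss L (Uab \<Phi> a b) h"
    unfolding worst_loss_def by (rule SUP_upper[OF assms(4)])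
  also have "\<dots> \<le> entropy_set L (Uab \<Phi> a b)" by (rule minimax[OF assms(1,3,4)])
  finally have P2: "exp_loss L h pstar \<le> entropy_set L (Uab \<Phi> a b)" .
  have P3: "exp_loss L h pstar = entropy_set L (Uab \<Phi> a b)"
    if mx: "\<forall>p\<in>Uab \<Phi> a b. entropy L p \<le> entropy L pstar"
  proof (rule antisym[OF P2])
    have "entropy_set L (Uab \<Phi> a b) \<le> entropy L pstar"
      unfolding entropy_set_def by (rule SUP_least) (use mx in blast)
    also have "\<dots> \<le> exp_loss L h pstar" unfolding entropy_def by (rule INF_lower[OF hr])
    finally show "entropy_set L (Uab \<Phi> a b) \<le> exp_loss L h pstar" .
  qed
  have P4: "exp_loss L h pstar = LP_lower L \<Phi> a b h"
    if mn: "\<forall>p\<in>Uab \<Phi> a b. exp_loss L h pstar \<le> exp_loss L h p"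
    by (rule antisym[OF LP_dual[OF assms(1) hr assms(4) mn] P1])
  show ?thesis using P1 P2 P3 P4 by blast
qed

end
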